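(* Let $\kappa,\lambda\in\mathbb{R}$, let ${\rm Y}$ be a locally ${\sf CAT}(\kappa)$ space and let ${\sf E}\colon{\rm Y}\to\mathbb{R}\cup\{+\infty\}$ be $\lambda$-convex and lower semicontinuous. Then for every $y\in D(-\partial^-{\sf E})$ \[ |\partial^-{\sf E}|(y)\le\inf_{v\in-\partial^-{\sf E}(y)}|v|_y . \] In particular $D(-\partial^-{\sf E})\subset D(|\partial^-{\sf E}|)$.
   Context: Locally ${\sf CAT}(\kappa)$ space: complete geodesic metric space $({\rm Y},{\sf d}_{\rm Y})$ in which each point has a neighbourhood that is ${\sf CAT}(\kappa)$ (geodesic triangles of perimeter $<2D_\kappa$ are thinner than comparison triangles in the model plane $\mathbb{M}_\kappa$ of constant curvature $\kappa$; $D_\kappa=\pi/\sqrt\kappa$ if $\kappa>0$, $\infty$ otherwise). Tangent cone ${\rm T}_y{\rm Y}$: completion of the space of constant speed geodesics $\gamma$ emanating from $y$ (defined on some $[0,\varepsilon)$), modulo ${\sf d}_y(\gamma,\eta):=\lim_{t\downarrow0}{\sf d}_{\rm Y}(\gamma_t,\eta_t)/t=0$, with distance ${\sf d}_y$; $\gamma'_0$ is the class of $\gamma$, $0_y$ that of the constant curve, $|v|_y:={\sf d}_y(v,0_y)$, $\langle v,w\rangle_y:=\frac12(|v|_y^2+|w|_y^2-{\sf d}_y^2(v,w))$. $\lambda$-convexity: ${\sf E}(\gamma_t)\le(1-t){\sf E}(\gamma_0)+t{\sf E}(\gamma_1)-\frac\lambda2t(1-t){\sf d}^2_{\rm Y}(\gamma_0,\gamma_1)$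 along every constant speed geodesic $\gamma\colon[0,1]\to{\rm Y}$; $D({\sf E})=\{{\sf E}<\infty\}$. Slope: $|\partial^-{\sf E}|(y):=\limsup_{z\to y}\frac{({\sf E}(y)-{\sf E}(z))^+}{{\sf d}_{\rm Y}(y,z)}$ for $y\in D({\sf E})$, and $D(|\partial^-{\sf E}|)$ is the set where it is finite. Minus-subdifferential: for $y\in D({\sf E})$, $-\partial^-{\sf E}(y)$ is the set of $v\in{\rm T}_y{\rm Y}$ such that for every $z\in{\rm Y}$ there is a geodesic $\gamma\colon[0,1]\to{\rm Y}$ from $y$ to $z$ with ${\sf E}(y)-\langle v,\gamma'_0\rangle_y+\frac\lambda2{\sf d}^2_{\rm Y}(y,z)\le{\sf E}(z)$; $D(-\partial^-{\sf E})$ is the set of $y$ where this set is nonempty. *)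

theory Defs
  imports "HOL-Analysis.Analysis"
begin

definition mink :: "real \<times> real \<times> real \<Rightarrow> real \<times> real \<times> real \<Rightarrow> real" where
  "mink u v = fst u * fst v + fst (snd u) * fst (snd v) - snd (snd u) * snd (snd v)"

text \<open>kappa > 0: sphere of radius 1/sqrt kappa; kappa = 0: the plane z = 0;
  kappa < 0: upper sheet of the hyperboloid of curvature kappa (Minkowski model).\<close>
definition model_carrier :: "real \<Rightarrow> (real \<times> real \<times> real) set" where
  "model_carrier k =
     (if k > 0 then {v. inner v v = 1 / k}
      else if k = 0 then {v. snd (snd v) = 0}
      else {v. mink v v = 1 / k \<and> snd (snd v) > 0})"

definition model_dist :: "real \<Rightarrow> real \<times> real \<times> real \<Rightarrow> real \<times> real \<times> real \<Rightarrow> real" where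
  "model_dist k u v =
     (if k > 0 then arccos (k * inner u v) / sqrt k
      else if k = 0 then dist u v
      else arcosh (k * mink u v) / sqrt (- k))"

definition geodesic_seg :: "(real \<Rightarrow> 'a::metric_space) \<Rightarrow> 'a \<Rightarrow> 'a \<Rightarrow> bool" where
  "geodesic_seg \<gamma> x z \<longleftrightarrow> \<gamma> 0 = x \<and> \<gamma> 1 = z \<and>
     (\<forall>s\<in>{0..1}. \<forall>t\<in>{0..1}. dist (\<gamma> s) (\<gamma> t) = \<bar>s - t\<bar> * dist x z)"

definition geodesic_space :: "'a::metric_space itself \<Rightarrow> bool" where
  "geodesic_space _ \<longleftrightarrow> (\<forall>x z::'a. \<exists>\<gamma>. geodesic_seg \<gamma> x z)"

text \<open>A triangle is given by three sides
  g 0, g 1, g 2, side i going from vertex i to vertex (i+1) mod 3; A i are comparison vertices,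
  and P, Q comparison points of g i s and g j t.\<close>
definition CAT_set :: "real \<Rightarrow> 'a::metric_space set \<Rightarrow> bool" where
  "CAT_set k U \<longleftrightarrow>
    (\<forall>x\<in>U. \<forall>z\<in>U. (k \<le> 0 \<or> dist x z < pi / sqrt k) \<longrightarrow>
        (\<exists>\<gamma>. geodesic_seg \<gamma> x z \<and> \<gamma> ` {0..1} \<subseteq> U)) \<and>
    (\<forall>g :: nat \<Rightarrow> real \<Rightarrow> 'a.
       (\<forall>i<3. geodesic_seg (g i) (g i 0) (g (Suc i mod 3) 0) \<and> g i ` {0..1} \<subseteq> U) \<and>
       (k \<le> 0 \<or> (\<Sum>i<3. dist (g i 0) (g i 1)) < 2 * pi / sqrt k) \<longrightarrow>
       (\<forall>A :: nat \<Rightarrow> real \<times> real \<times> real.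
          (\<forall>i<3. A i \<in> model_carrier k \<and>
                  model_dist k (A i) (A (Suc i mod 3)) = dist (g i 0) (g i 1)) \<longrightarrow>
          (\<forall>i<3. \<forall>j<3. \<forall>s\<in>{0..1}. \<forall>t\<in>{0..1}. \<forall>P Q.
              P \<in> model_carrier k \<and> Q \<in> model_carrier k \<and>
              model_dist k (A i) P = s * dist (g i 0) (g i 1) \<and>
              model_dist k P (A (Suc i mod 3)) = (1 - s) * dist (g i 0) (g i 1) \<and>
              model_dist k (A j) Q = t * dist (g j 0) (g j 1) \<and>
              model_dist k Q (A (Suc j mod 3)) = (1 - t) * dist (g j 0) (g j 1) \<longrightarrow>
              dist (g i s) (g j t) \<le> model_dist k P Q)))"

definition locally_CAT :: "real \<Rightarrow> 'a::metric_space itself \<Rightarrow> bool" where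
  "locally_CAT k T \<longleftrightarrow> (\<forall>y::'a. \<exists>U. y \<in> interior U \<and> CAT_set k U)"

definition germ :: "'a::metric_space \<Rightarrow> (real \<Rightarrow> 'a) \<Rightarrow> bool" where
  "germ y \<gamma> \<longleftrightarrow> \<gamma> 0 = y \<and> (\<exists>\<epsilon>>0. \<exists>c\<ge>0. \<forall>s\<in>{0..<\<epsilon>}. \<forall>t\<in>{0..<\<epsilon>}.
      dist (\<gamma> s) (\<gamma> t) = c * \<bar>s - t\<bar>)"

definition dgerm :: "(real \<Rightarrow> 'a::metric_space) \<Rightarrow> (real \<Rightarrow> 'a) \<Rightarrow> real" where
  "dgerm \<gamma> \<eta> = Lim (at_right 0) (\<lambda>t. dist (\<gamma> t) (\<eta> t) / t)"

text \<open>Elements of the tangent cone T_y Y (the completion of the germs) are represented by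
  d_y-Cauchy sequences of germs at y.\<close>
definition tangent_seq :: "'a::metric_space \<Rightarrow> (nat \<Rightarrow> real \<Rightarrow> 'a) \<Rightarrow> bool" where
  "tangent_seq y v \<longleftrightarrow> (\<forall>n. germ y (v n)) \<and>
     (\<forall>e>0. \<exists>N. \<forall>m\<ge>N. \<forall>n\<ge>N. dgerm (v m) (v n) < e)"

definition tnorm :: "'a::metric_space \<Rightarrow> (nat \<Rightarrow> real \<Rightarrow> 'a) \<Rightarrow> real" where
  "tnorm y v = lim (\<lambda>n. dgerm (v n) (\<lambda>_. y))"

text \<open>\<langle>v, gamma'_0\<rangle>_y for v in T_y Y and a germ gamma.\<close>
definition tinner :: "'a::metric_space \<Rightarrow> (nat \<Rightarrow> real \<Rightarrow> 'a) \<Rightarrow> (real \<Rightarrow> 'a) \<Rightarrow> real" where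
  "tinner y v \<gamma> = lim (\<lambda>n. ((dgerm (v n) (\<lambda>_. y))\<^sup>2 + (dgerm \<gamma> (\<lambda>_. y))\<^sup>2
                               - (dgerm (v n) \<gamma>)\<^sup>2) / 2)"

definition lambda_convex :: "real \<Rightarrow> ('a::metric_space \<Rightarrow> ereal) \<Rightarrow> bool" where
  "lambda_convex l E \<longleftrightarrow> (\<forall>\<gamma> x z. geodesic_seg \<gamma> x z \<longrightarrow> (\<forall>t\<in>{0..1}.
      E (\<gamma> t) \<le> ereal (1 - t) * E x + ereal t * E z - ereal (l / 2 * t * (1 - t) * (dist x z)\<^sup>2)))"

definition lsc :: "('a::topological_space \<Rightarrow> ereal) \<Rightarrow> bool" where
  "lsc E \<longleftrightarrow> (\<forall>c. closed {x. E x \<le> c})"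

definition slope :: "('a::metric_space \<Rightarrow> ereal) \<Rightarrow> 'a \<Rightarrow> ereal" where
  "slope E y = Limsup (at y) (\<lambda>z. max 0 (E y - E z) / ereal (dist y z))"

definition minus_subdiff :: "real \<Rightarrow> ('a::metric_space \<Rightarrow> ereal) \<Rightarrow> 'a \<Rightarrow> (nat \<Rightarrow> real \<Rightarrow> 'a) set" where
  "minus_subdiff l E y = {v. E y \<noteq> \<infinity> \<and> tangent_seq y v \<and>
     (\<forall>z. \<exists>\<gamma>. geodesic_seg \<gamma> y z \<and>
        E y - ereal (tinner y v \<gamma>) + ereal (l / 2 * (dist y z)\<^sup>2) \<le> E z)}"

definition dom_subdiff :: "real \<Rightarrow> ('a::metric_space \<Rightarrow> ereal) \<Rightarrow> 'a set" where
  "dom_subdiff l E = {y. E y \<noteq> \<infinity> \<and> minus_subdiff l E y \<noteq> {}}"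

definition dom_slope :: "('a::metric_space \<Rightarrow> ereal) \<Rightarrow> 'a set" where
  "dom_slope E = {y. E y \<noteq> \<infinity> \<and> slope E y < \<infinity>}"

end

theory Submission
  imports Defs "HOL-Real_Asymp.Real_Asymp"
begin
lemma mono_lim:
  fixes C :: "real \<Rightarrow> real"
  assumes s1: "0 < s1"
    and mono: "\<And>s t. 0 < s \<Longrightarrow> s \<le> t \<Longrightarrow> t < s1 \<Longrightarrow> C t \<le> C s"
    and bnd: "\<And>s. 0 < s \<Longrightarrow> s < s1 \<Longrightarrow> C s \<le> B"
  shows "\<exists>L. (C \<longlongrightarrow> L) (at_right 0)"
proof -
  define L where "L = Sup (C ` {0<..<s1})"
  have ne: "C ` {0<..<s1} \<noteq> {}" using s1 by auto
  have bdd: "bdd_above (C ` {0<..<s1})" using bnd by (auto intro!: bdd_aboveI2)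
  have "(C \<longlongrightarrow> L) (at_right 0)"
  proof (rule order_tendstoI)
    fix a assume "a < L"
    then obtain x0 where x0: "x0 \<in> {0<..<s1}" "a < C x0"
      using less_cSup_iff[OF ne bdd] unfolding L_def by auto
    have "eventually (\<lambda>x. x \<in> {0<..<x0}) (at_right (0::real))"
      using x0 by (intro eventually_at_right_real) auto
    then show "eventually (\<lambda>x. a < C x) (at_right 0)"
    proof (rule eventually_mono)
      fix x assume "x \<in> {0<..<x0}"
      then have "C x0 \<le> C x" using x0 by (intro mono) auto
      then show "a < C x" using x0 by simp
    qed
  next
    fix a assume "L < a"
    have "eventually (\<lambda>x. x \<in> {0<..<s1}) (at_right (0::real))"
      using s1 by (intro eventually_at_right_real) auto
    then show "eventually (\<lambda>x. C x < a) (at_right 0)"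
    proof (rule eventually_mono)
      fix x assume "x \<in> {0<..<s1}"
      then have "C x \<le> L" unfolding L_def using bdd by (intro cSup_upper) auto
      then show "C x < a" using \<open>L < a\<close> by simp
    qed
  qed
  then show ?thesis by blast
qed

lemma final_limit:
  fixes d C \<phi> \<sigma> :: "real \<Rightarrow> real"
  assumes K: "K > 0" and s1: "s1 > 0"
    and dbd: "\<And>s. 0 < s \<Longrightarrow> s < s1 \<Longrightarrow> 0 \<le> d s \<and> d s \<le> M * s"
    and C: "(C \<longlongrightarrow> C0) (at_right 0)"
    and \<phi>c: "isCont \<phi> 0" and \<phi>0: "\<phi> 0 = 1/2" and \<sigma>c: "isCont \<sigma> 0" and \<sigma>0: "\<sigma> 0 = 1"
    and eq: "\<And>s. 0 < s \<Longrightarrow> s < s1 \<Longrightarrow> \<phi> (K * d s) * (K * d s)^2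
       = \<phi> (c * s) * (c * s)^2 + (p * s * \<sigma>(p * s)) * (q * s * \<sigma>(q * s)) * (1 - C s)"
  shows "\<exists>L. ((\<lambda>s. d s / s) \<longlongrightarrow> L) (at_right 0)"
proof -
  define G where "G s = \<phi> (c * s) * c^2 + p*q*\<sigma>(p * s)*\<sigma>(q * s)*(1 - C s)" for s
  define G0 where "G0 = 1/2 * c^2 + p*q*(1 - C0)"
  have lin: "((\<lambda>s. e * s) \<longlongrightarrow> 0) (at_right 0)" for e :: real
    using tendsto_mult[OF tendsto_const[of e] tendsto_ident_at[of "0::real" "{0<..}"]] by simp
  have h1: "((\<lambda>s. \<phi> (c * s)) \<longlongrightarrow> 1/2) (at_right 0)"
    using isCont_tendsto_compose[OF \<phi>c lin[of c]] \<phi>0 by simp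
  have h2: "((\<lambda>s. \<sigma> (e * s)) \<longlongrightarrow> 1) (at_right 0)" for e
    using isCont_tendsto_compose[OF \<sigma>c lin[of e]] \<sigma>0 by simp
  have "((\<lambda>s. \<phi> (c * s) * c^2 + p*q*\<sigma>(p * s)*\<sigma>(q * s)*(1 - C s)) \<longlongrightarrow>
      1/2 * c^2 + p*q*1*1*(1 - C0)) (at_right 0)"
    by (intro tendsto_add tendsto_mult tendsto_const tendsto_diff h1 h2 C)
  then have G: "(G \<longlongrightarrow> G0) (at_right 0)"
    unfolding G_def G0_def by simp
  have ev: "eventually (\<lambda>s. s \<in> {0<..<s1}) (at_right (0::real))"
    using s1 by (intro eventually_at_right_real) auto
  have Kd: "((\<lambda>s. K * d s) \<longlongrightarrow> 0) (at_right 0)"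
  proof (rule tendsto_sandwich[where f="\<lambda>_. 0" and h="\<lambda>s. (K*M) * s"])
    show "eventually (\<lambda>s. 0 \<le> K * d s) (at_right 0)"
      using ev by (rule eventually_mono) (use dbd K in auto)
    show "eventually (\<lambda>s. K * d s \<le> (K*M) * s) (at_right 0)"
      using ev by (rule eventually_mono) (use dbd K in auto)
  qed (auto intro: lin)
  have \<phi>Kd: "((\<lambda>s. \<phi> (K * d s)) \<longlongrightarrow> 1/2) (at_right 0)"
    using isCont_tendsto_compose[OF \<phi>c Kd] \<phi>0 by simp
  have pos: "eventually (\<lambda>s. \<phi> (K * d s) > 0) (at_right 0)"
    using order_tendstoD(1)[OF \<phi>Kd, of 0] by simp
  have sq: "((\<lambda>s. (d s / s)^2) \<longlongrightarrow> G0 / (1/2 * K^2)) (at_right 0)"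
  proof (rule Lim_transform_eventually)
    show "((\<lambda>s. G s / (\<phi> (K * d s) * K^2)) \<longlongrightarrow> G0 / (1/2 * K^2)) (at_right 0)"
      using K by (intro tendsto_intros G \<phi>Kd) auto
    show "eventually (\<lambda>s. G s / (\<phi> (K * d s) * K^2) = (d s / s)^2) (at_right 0)"
      using eventually_conj[OF ev pos]
    proof (rule eventually_mono)
      fix s assume s: "s \<in> {0<..<s1} \<and> 0 < \<phi> (K * d s)"
      have r: "\<phi> (c * s) * (c * s)^2 + (p * s * \<sigma>(p * s)) * (q * s * \<sigma>(q * s)) * (1 - C s) = s^2 * G s"
        unfolding G_def power2_eq_square by (simp add: ring_distribs mult_ac)
      have e: "\<phi> (K * d s) * (K * d s)^2 = s^2 * G s"
        using eq[of s] s r by simp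
      have "G s = \<phi> (K * d s) * (K * d s)^2 / s^2" using e s by (simp add: eq_divide_eq mult.commute)
      also have "\<dots> = \<phi> (K * d s) * K^2 * (d s / s)^2" by (simp add: power_mult_distrib power_divide)
      finally show "G s / (\<phi> (K * d s) * K^2) = (d s / s)^2" using s K by simp
    qed
  qed
  have "((\<lambda>s. sqrt ((d s / s)^2)) \<longlongrightarrow> sqrt (G0 / (1/2 * K^2))) (at_right 0)"
    by (intro tendsto_intros sq)
  moreover have "eventually (\<lambda>s. sqrt ((d s / s)^2) = d s / s) (at_right 0)"
    using ev by (rule eventually_mono) (use dbd in auto)
  ultimately have "((\<lambda>s. d s / s) \<longlongrightarrow> sqrt (G0 / (1/2 * K^2))) (at_right 0)"
    by (rule Lim_transform_eventually)
  then show ?thesis by blast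
qed

definition thin_prop :: "real \<Rightarrow> real \<Rightarrow> real \<Rightarrow> (real \<Rightarrow> real) \<Rightarrow> real \<Rightarrow> bool" where
 "thin_prop k a b d s \<longleftrightarrow> (\<forall>Oo A B P Q r. Oo \<in> model_carrier k \<and> A \<in> model_carrier k \<and>
    B \<in> model_carrier k \<and> P \<in> model_carrier k \<and> Q \<in> model_carrier k \<and>
    model_dist k Oo A = a* s \<and> model_dist k A B = d s \<and> model_dist k B Oo = b* s \<and> 0 \<le> r \<and> r \<le> 1 \<and>
    model_dist k Oo P = r*(a* s) \<and> model_dist k P A = (1-r)*(a* s) \<and>
    model_dist k B Q = (1-r)*(b* s) \<and> model_dist k Q Oo = r*(b* s) \<longrightarrow> d (r* s) \<le> model_dist k P Q)"

lemma dist3_eq: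
  fixes x1 y1 z1 x2 y2 z2 v :: real
  assumes "0 \<le> v" "(x1-x2)^2+(y1-y2)^2+(z1-z2)^2 = v^2"
  shows "dist (x1,y1,z1) (x2,y2,z2) = v"
  using assms by (simp add: dist_Pair_Pair dist_real_def real_sqrt_unique add.assoc)

lemma model0:
  fixes d :: "real \<Rightarrow> real"
  assumes a: "a > 0" and b: "b > 0" and s1: "s1 > 0"
    and tri: "\<And>s. 0 < s \<Longrightarrow> s < s1 \<Longrightarrow> \<bar>a-b\<bar>* s \<le> d s \<and> d s \<le> (a+b)* s"
    and thin: "\<And>s. 0 < s \<Longrightarrow> s < s1 \<Longrightarrow> thin_prop 0 a b d s"
  shows "\<exists>L. ((\<lambda>s. d s / s) \<longlongrightarrow> L) (at_right 0)"
proof -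
  have key: "d (r* s) \<le> r * d s" if s: "0 < s" "s < s1" and r: "0 \<le> r" "r \<le> 1" for s r
  proof -
    define x where "x = a* s"
    define y where "y = b* s"
    define D where "D = d s"
    have x: "x > 0" and y: "y > 0" using a b s by (auto simp: x_def y_def)
    have D1: "\<bar>x - y\<bar> \<le> D" and D2: "D \<le> x + y"
    proof -
      have "\<bar>a * s - b * s\<bar> = \<bar>a-b\<bar> * s" using s by (simp add: abs_mult left_diff_distrib[symmetric])
      then show "\<bar>x - y\<bar> \<le> D" "D \<le> x + y" using tri[OF s] by (auto simp: x_def y_def D_def algebra_simps)
    qed
    define C where "C = (x^2 + y^2 - D^2) / (2*x*y)"
    have D0: "0 \<le> D" using D1 by linarith
    have sq1: "(x-y)^2 \<le> D^2" using D1 by (metis abs_le_square_iff abs_of_nonneg D0)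
    have sq2: "D^2 \<le> (x+y)^2" using D2 D0 by (simp add: power_mono)
    have xy: "2*x*y > 0" using x y by simp
    have C1: "C \<le> 1" unfolding C_def using sq1 xy by (simp add: divide_le_eq power2_eq_square algebra_simps)
    have C2: "-1 \<le> C" unfolding C_def using sq2 xy by (simp add: le_divide_eq power2_eq_square algebra_simps)
    define S where "S = sqrt (1 - C^2)"
    have S2: "S^2 = 1 - C^2" unfolding S_def using C1 C2 by (simp add: abs_square_le_1)
    have Ceq: "2*x*y*C = x^2 + y^2 - D^2" unfolding C_def using x y by simp
    let ?Oo = "(0::real,0::real,0::real)"
    let ?A = "(x,0::real,0::real)"
    let ?B = "(y*C, y*S, 0::real)"
    let ?P = "(r*x,0::real,0::real)"
    let ?Q = "(r*y*C, r*y*S, 0::real)"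
    have "thin_prop 0 a b d s" by (rule thin[OF s])
    then have "d (r* s) \<le> model_dist 0 ?P ?Q"
      unfolding thin_prop_def
    proof (elim allE impE)
      show "?Oo \<in> model_carrier 0 \<and> ?A \<in> model_carrier 0 \<and> ?B \<in> model_carrier 0 \<and>
        ?P \<in> model_carrier 0 \<and> ?Q \<in> model_carrier 0 \<and>
        model_dist 0 ?Oo ?A = a* s \<and> model_dist 0 ?A ?B = d s \<and> model_dist 0 ?B ?Oo = b* s \<and> 0 \<le> r \<and> r \<le> 1 \<and>
        model_dist 0 ?Oo ?P = r*(a* s) \<and> model_dist 0 ?P ?A = (1-r)*(a* s) \<and>
        model_dist 0 ?B ?Q = (1-r)*(b* s) \<and> model_dist 0 ?Q ?Oo = r*(b* s)"
        unfolding model_dist_def model_carrier_def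
        apply (simp add: r)
        apply (intro conjI)
        apply (rule dist3_eq; use x in \<open>simp add: x_def\<close>)
        apply (rule dist3_eq; use D0 in \<open>simp add: D_def[symmetric]\<close>)
        using S2 Ceq apply algebra
        apply (rule dist3_eq; use y in \<open>simp add: y_def\<close>)
        using S2 apply algebra
        apply (rule dist3_eq; use x r in \<open>simp add: x_def\<close>)
        apply (rule dist3_eq; use x r in \<open>simp add: x_def\<close>)
        apply algebra
        apply (rule dist3_eq; use y r in \<open>simp add: y_def\<close>)
        using S2 apply algebra
        apply (rule dist3_eq; use y r in \<open>simp add: y_def\<close>)
        using S2 apply algebra
        done
    qed
    also have "model_dist 0 ?P ?Q = r * D"
      unfolding model_dist_def
      apply simp
      apply (rule dist3_eq; use D0 r in simp)
      using S2 Ceq apply algebra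
      done
    finally show ?thesis by (simp add: D_def)
  qed
  have "\<exists>L. ((\<lambda>s. - (d s / s)) \<longlongrightarrow> L) (at_right 0)"
  proof (rule mono_lim[OF s1])
    fix s t :: real assume st: "0 < s" "s \<le> t" "t < s1"
    have "d ((s/t)*t) \<le> (s/t) * d t" using st by (intro key) auto
    then have "d s \<le> (s/t) * d t" using st by simp
    then show "- (d t / t) \<le> - (d s / s)" using st by (simp add: field_simps)
  next
    fix s :: real assume "0 < s" "s < s1"
    then show "- (d s / s) \<le> 0" using tri[of s] by (simp add: zero_le_divide_iff) (smt (verit) abs_ge_zero mult_nonneg_nonneg)
  qed
  then obtain L where "((\<lambda>s. - (d s / s)) \<longlongrightarrow> L) (at_right 0)" by blast
  from tendsto_minus[OF this] show ?thesis by auto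
qed

definition cphi :: "real \<Rightarrow> real" where "cphi u = (if u = 0 then 1/2 else (1 - cos u) / u^2)"
definition csig :: "real \<Rightarrow> real" where "csig u = (if u = 0 then 1 else sin u / u)"

lemma cphi_id: "cphi u * u^2 = 1 - cos u" by (simp add: cphi_def)
lemma csig_id: "u * csig u = sin u" by (simp add: csig_def)
lemma cphi_cont: "isCont cphi 0"
proof -
  have "((\<lambda>u::real. (1 - cos u)/u^2) \<longlongrightarrow> 1/2) (at 0)" by real_asymp
  then have "(cphi \<longlongrightarrow> 1/2) (at 0)" by (rule Lim_transform_eventually) (auto simp: cphi_def eventually_at_filter)
  then show ?thesis by (simp add: isCont_def cphi_def)
qed
lemma csig_cont: "isCont csig 0"
proof -
  have "((\<lambda>u::real. sin u/u) \<longlongrightarrow> 1) (at 0)" by real_asymp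
  then have "(csig \<longlongrightarrow> 1) (at 0)" by (rule Lim_transform_eventually) (auto simp: csig_def eventually_at_filter)
  then show ?thesis by (simp add: isCont_def csig_def)
qed

definition sph :: "real \<Rightarrow> real \<Rightarrow> real \<Rightarrow> real \<Rightarrow> real \<times> real \<times> real" where
  "sph k t C S = (cos t / sqrt k, sin t * C / sqrt k, sin t * S / sqrt k)"

lemma sph_inner: "k > 0 \<Longrightarrow> k * inner (sph k t C1 S1) (sph k u C2 S2) = cos t * cos u + sin t * sin u * (C1*C2+S1*S2)"
  by (simp add: sph_def inner_real_def field_simps power2_eq_square[symmetric])

lemma sph_carrier: "k > 0 \<Longrightarrow> C^2 + S^2 = 1 \<Longrightarrow> sph k t C S \<in> model_carrier k"
proof -
  assume k: "k > 0" and CS: "C^2 + S^2 = 1"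
  have "k * inner (sph k t C S) (sph k t C S) = 1"
    using sph_inner[OF k, of t C S t C S] CS by (simp add: power2_eq_square[symmetric] sin_cos_squared_add)
  then show ?thesis using k by (simp add: model_carrier_def field_simps)
qed

lemma sph_dist: "k > 0 \<Longrightarrow> C^2 + S^2 = 1 \<Longrightarrow> \<bar>t - u\<bar> \<le> pi \<Longrightarrow>
   model_dist k (sph k t C S) (sph k u C S) = \<bar>t - u\<bar> / sqrt k"
proof -
  assume k: "k > 0" and CS: "C^2 + S^2 = 1" and tu: "\<bar>t - u\<bar> \<le> pi"
  have "k * inner (sph k t C S) (sph k u C S) = cos (t - u)"
    using sph_inner[OF k, of t C S u C S] CS by (simp add: power2_eq_square cos_diff)
  moreover have "arccos (cos (t - u)) = \<bar>t - u\<bar>"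
    using arccos_cos[of "\<bar>t - u\<bar>"] tu by simp
  ultimately show ?thesis using k by (simp add: model_dist_def)
qed

lemma sph_zero: "sph k 0 C S = sph k 0 1 0" by (simp add: sph_def)

lemma modelpos:
  fixes d :: "real \<Rightarrow> real"
  assumes a: "a > 0" and b: "b > 0" and s1: "s1 > 0" and k: "k > 0"
    and small: "sqrt k * (a+b) * s1 \<le> pi/2"
    and tri: "\<And>s. 0 < s \<Longrightarrow> s < s1 \<Longrightarrow> \<bar>a-b\<bar>* s \<le> d s \<and> d s \<le> (a+b)* s"
    and thin: "\<And>s. 0 < s \<Longrightarrow> s < s1 \<Longrightarrow> thin_prop k a b d s"
  shows "\<exists>L. ((\<lambda>s. d s / s) \<longlongrightarrow> L) (at_right 0)"
proof -
  define K where "K = sqrt k"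
  have K: "K > 0" using k by (simp add: K_def)
  define Cf where "Cf s = (cos (K * d s) - cos (K*a* s) * cos (K*b* s)) / (sin (K*a* s) * sin (K*b* s))" for s
  have basic: "0 < K*a* s \<and> K*a* s \<le> pi/2 \<and> 0 < K*b* s \<and> K*b* s \<le> pi/2 \<and> 0 \<le> K * d s \<and>
      \<bar>K*a* s - K*b* s\<bar> \<le> K * d s \<and> K * d s \<le> K*a* s + K*b* s \<and> K*a* s + K*b* s \<le> pi"
    if s: "0 < s" "s < s1" for s
  proof -
    have "K*(a+b)* s \<le> K*(a+b)* s1" using s K a b by (intro mult_left_mono) auto
    then have sm: "K*a* s + K*b* s \<le> pi/2" using small by (simp add: K_def algebra_simps)
    have "\<bar>a * s - b * s\<bar> = \<bar>a-b\<bar> * s" using s by (simp add: abs_mult left_diff_distrib[symmetric])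
    then have t: "\<bar>a * s - b * s\<bar> \<le> d s" "d s \<le> a* s + b* s" using tri[OF s] by (auto simp: algebra_simps)
    have "K * \<bar>a * s - b * s\<bar> \<le> K * d s" using t K by (intro mult_left_mono) auto
    moreover have "K * d s \<le> K * (a* s + b* s)" using t K by (intro mult_left_mono) auto
    moreover have "K * \<bar>a * s - b * s\<bar> = \<bar>K*a* s - K*b* s\<bar>" using K by (simp add: abs_mult right_diff_distrib[symmetric] mult.assoc)
    ultimately have t3: "\<bar>K*a* s - K*b* s\<bar> \<le> K * d s" "K * d s \<le> K*a* s + K*b* s"
      by (simp_all add: algebra_simps)
    have p1: "0 < K*a* s" "0 < K*b* s" using K a b s by simp_all
    show ?thesis using p1 sm t3 by linarith
  qed
  have Cb: "-1 \<le> Cf s \<and> Cf s \<le> 1" if s: "0 < s" "s < s1" for s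
  proof -
    define x where "x = K*a* s"
    define y where "y = K*b* s"
    define D where "D = K * d s"
    have B: "0 < x" "x \<le> pi/2" "0 < y" "y \<le> pi/2" "0 \<le> D" "\<bar>x - y\<bar> \<le> D" "D \<le> x + y" "x + y \<le> pi"
      using basic[OF s] by (auto simp: x_def y_def D_def)
    have sxy: "sin x * sin y > 0" using B by (auto intro!: sin_gt_zero mult_pos_pos)
    have "cos D \<le> cos \<bar>x - y\<bar>" using B by (subst cos_mono_le_eq) auto
    then have c1: "cos D \<le> cos x * cos y + sin x * sin y" by (simp add: cos_diff)
    have "cos (x + y) \<le> cos D" using B by (subst cos_mono_le_eq) auto
    then have c2: "cos x * cos y - sin x * sin y \<le> cos D" by (simp add: cos_add)
    have "Cf s = (cos D - cos x * cos y) / (sin x * sin y)" by (simp add: Cf_def x_def y_def D_def)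
    then show ?thesis using c1 c2 sxy by (auto simp: divide_le_eq le_divide_eq)
  qed
  have key: "Cf s \<le> Cf (r * s)" if s: "0 < s" "s < s1" and r: "0 < r" "r \<le> 1" for s r
  proof -
    define x where "x = K*a* s"
    define y where "y = K*b* s"
    define D where "D = K * d s"
    have B: "0 < x" "x \<le> pi/2" "0 < y" "y \<le> pi/2" "0 \<le> D" "\<bar>x - y\<bar> \<le> D" "D \<le> x + y" "x + y \<le> pi"
      using basic[OF s] by (auto simp: x_def y_def D_def)
    have "r * s \<le> s" using r s by (simp add: mult_le_cancel_right1)
    then have rs: "0 < r * s" "r * s < s1" using r s by (simp, linarith)
    have B': "0 \<le> K * d (r * s)" using basic[OF rs] by auto
    have sxy: "sin x * sin y > 0" using B by (auto intro!: sin_gt_zero mult_pos_pos)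
    have rx: "0 < r * x" "r * x \<le> x" "0 < r * y" "r * y \<le> y" using B r by (auto simp: mult_le_cancel_right1)
    have srxy: "sin (r*x) * sin (r*y) > 0" using B rx by (auto intro!: sin_gt_zero mult_pos_pos)
    define C where "C = Cf s"
    have C: "-1 \<le> C" "C \<le> 1" using Cb[OF s] by (auto simp: C_def)
    have Ceq: "sin x * sin y * C = cos D - cos x * cos y"
    proof -
      have nz: "sin x \<noteq> 0" "sin y \<noteq> 0" using sxy by auto
      then show ?thesis by (simp add: C_def Cf_def x_def[symmetric] y_def[symmetric] D_def[symmetric])
    qed
    define S where "S = sqrt (1 - C^2)"
    have CS: "C^2 + S^2 = 1" unfolding S_def using C by (simp add: abs_square_le_1)
    let ?O = "sph k 0 1 0" let ?A = "sph k x 1 0" let ?B = "sph k y C S"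
    let ?P = "sph k (r*x) 1 0" let ?Q = "sph k (r*y) C S"
    have O': "?O = sph k 0 C S" by (rule sph_zero[symmetric])
    have th: "thin_prop k a b d s" by (rule thin[OF s])
    have thr: "d (r * s) \<le> model_dist k ?P ?Q"
      using th unfolding thin_prop_def
    proof (elim allE impE)
      have c: "?O \<in> model_carrier k" "?A \<in> model_carrier k" "?B \<in> model_carrier k"
        "?P \<in> model_carrier k" "?Q \<in> model_carrier k" using k CS by (auto intro!: sph_carrier)
      have pa: "\<bar>t - u\<bar> \<le> pi" if "0 \<le> t" "t \<le> pi/2" "0 \<le> u" "u \<le> pi/2" for t u
        using that by linarith
      have onez: "(1::real)^2 + 0^2 = 1" by simp
      have xk: "x / K = a * s" "y / K = b * s" using K by (simp_all add: x_def y_def)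
      have "model_dist k ?O ?A = \<bar>0 - x\<bar> / K"
        using sph_dist[OF k onez, of 0 x] pa[of 0 x] B by (simp add: K_def)
      also have "\<dots> = a * s" using B xk by simp
      finally have d1: "model_dist k ?O ?A = a * s" .
      have "k * inner ?A ?B = cos x * cos y + sin x * sin y * C" using sph_inner[OF k] by simp
      also have "\<dots> = cos D" using Ceq by simp
      finally have "model_dist k ?A ?B = arccos (cos D) / K" using k by (simp add: model_dist_def K_def)
      also have "\<dots> = d s" using B K by (simp add: arccos_cos D_def)
      finally have d2: "model_dist k ?A ?B = d s" .
      have "model_dist k ?B ?O = \<bar>y - 0\<bar> / K"
        unfolding O' using sph_dist[OF k CS, of y 0] pa[of y 0] B by (simp add: K_def)
      also have "\<dots> = b * s" using B xk by simp
      finally have d3: "model_dist k ?B ?O = b * s" .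
      have "model_dist k ?O ?P = \<bar>0 - r*x\<bar> / K"
        using sph_dist[OF k onez, of 0 "r*x"] pa[of 0 "r*x"] B rx by (simp add: K_def)
      also have "\<dots> = r * (x / K)" using rx by simp
      also have "\<dots> = r * (a * s)" using xk by simp
      finally have d4: "model_dist k ?O ?P = r * (a * s)" .
      have "model_dist k ?P ?A = \<bar>r*x - x\<bar> / K"
        using sph_dist[OF k onez, of "r*x" x] pa[of "r*x" x] B rx by (simp add: K_def)
      also have "\<bar>r*x - x\<bar> = (1-r) * x" using rx by (simp add: algebra_simps)
      also have "(1-r) * x / K = (1-r) * (x / K)" by simp
      also have "\<dots> = (1-r) * (a * s)" using xk by simp
      finally have d5: "model_dist k ?P ?A = (1-r) * (a * s)" .
      have "model_dist k ?B ?Q = \<bar>y - r*y\<bar> / K"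
        using sph_dist[OF k CS, of y "r*y"] pa[of y "r*y"] B rx by (simp add: K_def)
      also have "\<bar>y - r*y\<bar> = (1-r) * y" using rx by (simp add: algebra_simps)
      also have "(1-r) * y / K = (1-r) * (y / K)" by simp
      also have "\<dots> = (1-r) * (b * s)" using xk by simp
      finally have d6: "model_dist k ?B ?Q = (1-r) * (b * s)" .
      have "model_dist k ?Q ?O = \<bar>r*y - 0\<bar> / K"
        unfolding O' using sph_dist[OF k CS, of "r*y" 0] pa[of "r*y" 0] B rx by (simp add: K_def)
      also have "\<dots> = r * (y / K)" using rx by simp
      also have "\<dots> = r * (b * s)" using xk by simp
      finally have d7: "model_dist k ?Q ?O = r * (b * s)" .
      show "?O \<in> model_carrier k \<and> ?A \<in> model_carrier k \<and> ?B \<in> model_carrier k \<and>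
        ?P \<in> model_carrier k \<and> ?Q \<in> model_carrier k \<and>
        model_dist k ?O ?A = a * s \<and> model_dist k ?A ?B = d s \<and> model_dist k ?B ?O = b * s \<and> 0 \<le> r \<and> r \<le> 1 \<and>
        model_dist k ?O ?P = r * (a * s) \<and> model_dist k ?P ?A = (1-r) * (a * s) \<and>
        model_dist k ?B ?Q = (1-r) * (b * s) \<and> model_dist k ?Q ?O = r * (b * s)"
        using c d1 d2 d3 d4 d5 d6 d7 r by auto
    qed
    define w where "w = cos (r*x) * cos (r*y) + sin (r*x) * sin (r*y) * C"
    have sn: "0 \<le> sin (r*x) * sin (r*y)" using srxy by simp
    have "w \<le> cos (r*x) * cos (r*y) + sin (r*x) * sin (r*y)"
      unfolding w_def using mult_left_mono[OF C(2) sn] by simp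
    also have "\<dots> = cos (r*x - r*y)" by (simp add: cos_diff)
    finally have w1: "w \<le> 1" using cos_le_one[of "r*x - r*y"] by linarith
    have "cos (r*x + r*y) = cos (r*x) * cos (r*y) - sin (r*x) * sin (r*y)" by (simp add: cos_add)
    also have "\<dots> \<le> w" unfolding w_def using mult_left_mono[OF C(1) sn] by simp
    finally have w2: "-1 \<le> w" using cos_ge_minus_one[of "r*x + r*y"] by linarith
    have "k * inner ?P ?Q = w" using sph_inner[OF k] by (simp add: w_def)
    then have "model_dist k ?P ?Q = arccos w / K" using k by (simp add: model_dist_def K_def)
    with thr have "d (r * s) \<le> arccos w / K" by simp
    then have "K * d (r * s) \<le> arccos w" using K by (simp add: pos_le_divide_eq mult.commute)
    moreover have "K * d (r * s) \<le> pi" using basic[OF rs] by linarith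
    ultimately have "cos (arccos w) \<le> cos (K * d (r * s))"
      using B' arccos_bounded[OF w2 w1] by (subst cos_mono_le_eq) auto
    then have "w \<le> cos (K * d (r * s))" using w1 w2 by simp
    then have ineq: "C * (sin (r*x) * sin (r*y)) \<le> cos (K * d (r * s)) - cos (r*x) * cos (r*y)"
      by (simp add: w_def mult.commute)
    have e: "K*a*(r * s) = r*x" "K*b*(r * s) = r*y" by (simp_all add: x_def y_def mult_ac)
    have "Cf (r * s) = (cos (K * d (r * s)) - cos (r*x) * cos (r*y)) / (sin (r*x) * sin (r*y))"
      by (simp only: Cf_def e)
    then show ?thesis using ineq srxy by (simp add: C_def le_divide_eq)
  qed
  have "\<exists>L. (Cf \<longlongrightarrow> L) (at_right 0)"
  proof (rule mono_lim[OF s1])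
    fix s t :: real assume st: "0 < s" "s \<le> t" "t < s1"
    have "Cf t \<le> Cf ((s/t)*t)" using st by (intro key) auto
    then show "Cf t \<le> Cf s" using st by simp
  next
    fix s :: real assume "0 < s" "s < s1"
    then show "Cf s \<le> 1" using Cb by blast
  qed
  then obtain C0 where C0: "(Cf \<longlongrightarrow> C0) (at_right 0)" by blast
  show ?thesis
  proof (rule final_limit[OF K s1 _ C0 cphi_cont _ csig_cont, where M="a+b" and c="K*(a-b)" and p="K*a" and q="K*b"])
    fix s :: real assume s: "0 < s" "s < s1"
    show "0 \<le> d s \<and> d s \<le> (a+b) * s" using tri[OF s] by (smt (verit) abs_ge_zero mult_nonneg_nonneg s(1))
    have sxy: "sin (K*a* s) * sin (K*b* s) > 0" using basic[OF s] by (auto intro!: sin_gt_zero mult_pos_pos)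
    have ce: "sin (K*a* s) * sin (K*b* s) * Cf s = cos (K * d s) - cos (K*a* s) * cos (K*b* s)"
    proof -
      have "sin (K*a* s) \<noteq> 0" "sin (K*b* s) \<noteq> 0" using sxy by auto
      then show ?thesis by (simp add: Cf_def)
    qed
    have "cos (K*(a-b)* s) = cos (K*a* s - K*b* s)" by (simp add: algebra_simps)
    then have cd: "cos (K*(a-b)* s) = cos (K*a* s) * cos (K*b* s) + sin (K*a* s) * sin (K*b* s)" by (simp add: cos_diff)
    show "cphi (K * d s) * (K * d s)^2 = cphi (K*(a-b) * s) * (K*(a-b) * s)^2
      + (K*a * s * csig (K*a * s)) * (K*b * s * csig (K*b * s)) * (1 - Cf s)"
      unfolding cphi_id csig_id using ce cd by (simp add: algebra_simps)
  qed (auto simp: cphi_def csig_def)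
qed

definition hphi :: "real \<Rightarrow> real" where "hphi u = (if u = 0 then 1/2 else (cosh u - 1) / u^2)"
definition hsig :: "real \<Rightarrow> real" where "hsig u = (if u = 0 then 1 else sinh u / u)"

lemma hphi_id: "hphi u * u^2 = cosh u - 1" by (simp add: hphi_def)
lemma hsig_id: "u * hsig u = sinh u" by (simp add: hsig_def)
lemma hphi_cont: "isCont hphi 0"
proof -
  have "((\<lambda>u::real. (cosh u - 1)/u^2) \<longlongrightarrow> 1/2) (at 0)" unfolding cosh_field_def by real_asymp
  then have "(hphi \<longlongrightarrow> 1/2) (at 0)" by (rule Lim_transform_eventually) (auto simp: hphi_def eventually_at_filter)
  then show ?thesis by (simp add: isCont_def hphi_def)
qed
lemma hsig_cont: "isCont hsig 0"
proof -
  have "((\<lambda>u::real. sinh u/u) \<longlongrightarrow> 1) (at 0)" unfolding sinh_field_def by real_asymp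
  then have "(hsig \<longlongrightarrow> 1) (at 0)" by (rule Lim_transform_eventually) (auto simp: hsig_def eventually_at_filter)
  then show ?thesis by (simp add: isCont_def hsig_def)
qed

definition hyp :: "real \<Rightarrow> real \<Rightarrow> real \<Rightarrow> real \<Rightarrow> real \<times> real \<times> real" where
  "hyp k t C S = (sinh t * C / sqrt (-k), sinh t * S / sqrt (-k), cosh t / sqrt (-k))"

lemma hyp_mink: "k < 0 \<Longrightarrow> k * mink (hyp k t C1 S1) (hyp k u C2 S2) = cosh t * cosh u - sinh t * sinh u * (C1*C2+S1*S2)"
proof -
  assume k: "k < 0"
  have e: "sqrt (-k) * sqrt (-k) = -k" using k by simp
  show ?thesis unfolding mink_def hyp_def using k e
    by (simp add: field_simps)
qed

lemma hyp_carrier: "k < 0 \<Longrightarrow> C^2 + S^2 = 1 \<Longrightarrow> hyp k t C S \<in> model_carrier k"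
proof -
  assume k: "k < 0" and CS: "C^2 + S^2 = 1"
  have "k * mink (hyp k t C S) (hyp k t C S) = cosh t ^ 2 - sinh t ^ 2 * (C^2 + S^2)"
    using hyp_mink[OF k, of t C S t C S] by (simp add: power2_eq_square)
  also have "\<dots> = 1" using CS cosh_square_eq[of t] by simp
  finally have "k * mink (hyp k t C S) (hyp k t C S) = 1" .
  moreover have "snd (snd (hyp k t C S)) > 0" using k by (simp add: hyp_def)
  ultimately show ?thesis using k by (simp add: model_carrier_def field_simps)
qed

lemma hyp_dist: "k < 0 \<Longrightarrow> C^2 + S^2 = 1 \<Longrightarrow>
   model_dist k (hyp k t C S) (hyp k u C S) = \<bar>t - u\<bar> / sqrt (-k)"
proof -
  assume k: "k < 0" and CS: "C^2 + S^2 = 1"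
  have "k * mink (hyp k t C S) (hyp k u C S) = cosh (t - u)"
    using hyp_mink[OF k, of t C S u C S] CS by (simp add: power2_eq_square cosh_diff)
  moreover have "arcosh (cosh (t - u)) = \<bar>t - u\<bar>"
    using arcosh_cosh_real[of "\<bar>t - u\<bar>"] by simp
  ultimately show ?thesis using k by (simp add: model_dist_def)
qed

lemma hyp_zero: "hyp k 0 C S = hyp k 0 1 0" by (simp add: hyp_def)

lemma modelneg:
  fixes d :: "real \<Rightarrow> real"
  assumes a: "a > 0" and b: "b > 0" and s1: "s1 > 0" and k: "k < 0"
    and tri: "\<And>s. 0 < s \<Longrightarrow> s < s1 \<Longrightarrow> \<bar>a-b\<bar> * s \<le> d s \<and> d s \<le> (a+b) * s"
    and thin: "\<And>s. 0 < s \<Longrightarrow> s < s1 \<Longrightarrow> thin_prop k a b d s"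
  shows "\<exists>L. ((\<lambda>s. d s / s) \<longlongrightarrow> L) (at_right 0)"
proof -
  define K where "K = sqrt (-k)"
  have K: "K > 0" using k by (simp add: K_def)
  define Cf where "Cf s = (cosh (K*a * s) * cosh (K*b * s) - cosh (K * d s)) / (sinh (K*a * s) * sinh (K*b * s))" for s
  have basic: "0 < K*a * s \<and> 0 < K*b * s \<and> 0 \<le> K * d s \<and>
      \<bar>K*a * s - K*b * s\<bar> \<le> K * d s \<and> K * d s \<le> K*a * s + K*b * s"
    if s: "0 < s" "s < s1" for s
  proof -
    have "\<bar>a * s - b * s\<bar> = \<bar>a-b\<bar> * s" using s by (simp add: abs_mult left_diff_distrib[symmetric])
    then have t: "\<bar>a * s - b * s\<bar> \<le> d s" "d s \<le> a * s + b * s" using tri[OF s] by (auto simp: algebra_simps)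
    have "K * \<bar>a * s - b * s\<bar> \<le> K * d s" using t K by (intro mult_left_mono) auto
    moreover have "K * d s \<le> K * (a * s + b * s)" using t K by (intro mult_left_mono) auto
    moreover have "K * \<bar>a * s - b * s\<bar> = \<bar>K*a * s - K*b * s\<bar>" using K by (simp add: abs_mult right_diff_distrib[symmetric] mult.assoc)
    ultimately have t3: "\<bar>K*a * s - K*b * s\<bar> \<le> K * d s" "K * d s \<le> K*a * s + K*b * s"
      by (simp_all add: algebra_simps)
    have p1: "0 < K*a * s" "0 < K*b * s" using K a b s by simp_all
    show ?thesis using p1 t3 by linarith
  qed
  have Cb: "-1 \<le> Cf s \<and> Cf s \<le> 1" if s: "0 < s" "s < s1" for s
  proof -
    define x where "x = K*a * s"
    define y where "y = K*b * s"
    define D where "D = K * d s"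
    have B: "0 < x" "0 < y" "0 \<le> D" "\<bar>x - y\<bar> \<le> D" "D \<le> x + y"
      using basic[OF s] by (auto simp: x_def y_def D_def)
    have sxy: "sinh x * sinh y > 0" using B by simp
    have "cosh \<bar>x - y\<bar> \<le> cosh D" using B by (subst cosh_real_nonneg_le_iff) auto
    then have c1: "cosh x * cosh y - sinh x * sinh y \<le> cosh D" by (simp add: cosh_diff)
    have "cosh D \<le> cosh (x + y)" using B by (subst cosh_real_nonneg_le_iff) auto
    then have c2: "cosh D \<le> cosh x * cosh y + sinh x * sinh y" by (simp add: cosh_add)
    have "Cf s = (cosh x * cosh y - cosh D) / (sinh x * sinh y)" by (simp add: Cf_def x_def y_def D_def)
    then show ?thesis using c1 c2 sxy by (auto simp: divide_le_eq le_divide_eq)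
  qed
  have key: "Cf s \<le> Cf (r * s)" if s: "0 < s" "s < s1" and r: "0 < r" "r \<le> 1" for s r
  proof -
    define x where "x = K*a * s"
    define y where "y = K*b * s"
    define D where "D = K * d s"
    have B: "0 < x" "0 < y" "0 \<le> D" "\<bar>x - y\<bar> \<le> D" "D \<le> x + y"
      using basic[OF s] by (auto simp: x_def y_def D_def)
    have "r * s \<le> s" using r s by (simp add: mult_le_cancel_right1)
    then have rs: "0 < r * s" "r * s < s1" using r s by (simp, linarith)
    have B': "0 \<le> K * d (r * s)" using basic[OF rs] by auto
    have sxy: "sinh x * sinh y > 0" using B by simp
    have rx: "0 < r * x" "r * x \<le> x" "0 < r * y" "r * y \<le> y" using B r by (auto simp: mult_le_cancel_right1)
    have srxy: "sinh (r*x) * sinh (r*y) > 0" using rx by simp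
    define C where "C = Cf s"
    have C: "-1 \<le> C" "C \<le> 1" using Cb[OF s] by (auto simp: C_def)
    have Ceq: "sinh x * sinh y * C = cosh x * cosh y - cosh D"
    proof -
      have nz: "sinh x \<noteq> 0" "sinh y \<noteq> 0" using sxy by auto
      then show ?thesis by (simp add: C_def Cf_def x_def[symmetric] y_def[symmetric] D_def[symmetric])
    qed
    define S where "S = sqrt (1 - C^2)"
    have CS: "C^2 + S^2 = 1" unfolding S_def using C by (simp add: abs_square_le_1)
    let ?O = "hyp k 0 1 0" let ?A = "hyp k x 1 0" let ?B = "hyp k y C S"
    let ?P = "hyp k (r*x) 1 0" let ?Q = "hyp k (r*y) C S"
    have O': "?O = hyp k 0 C S" by (rule hyp_zero[symmetric])
    have th: "thin_prop k a b d s" by (rule thin[OF s])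
    have thr: "d (r * s) \<le> model_dist k ?P ?Q"
      using th unfolding thin_prop_def
    proof (elim allE impE)
      have c: "?O \<in> model_carrier k" "?A \<in> model_carrier k" "?B \<in> model_carrier k"
        "?P \<in> model_carrier k" "?Q \<in> model_carrier k" using k CS by (auto intro!: hyp_carrier)
      have onez: "(1::real)^2 + 0^2 = 1" by simp
      have xk: "x / K = a * s" "y / K = b * s" using K by (simp_all add: x_def y_def)
      have "model_dist k ?O ?A = \<bar>0 - x\<bar> / K"
        using hyp_dist[OF k onez, of 0 x] by (simp add: K_def)
      also have "\<dots> = a * s" using B xk by simp
      finally have d1: "model_dist k ?O ?A = a * s" .
      have "k * mink ?A ?B = cosh x * cosh y - sinh x * sinh y * C" using hyp_mink[OF k] by simp
      also have "\<dots> = cosh D" using Ceq by simp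
      finally have "model_dist k ?A ?B = arcosh (cosh D) / K" using k by (simp add: model_dist_def K_def)
      also have "\<dots> = d s" using B K by (simp add: arcosh_cosh_real D_def)
      finally have d2: "model_dist k ?A ?B = d s" .
      have "model_dist k ?B ?O = \<bar>y - 0\<bar> / K"
        unfolding O' using hyp_dist[OF k CS, of y 0] by (simp add: K_def)
      also have "\<dots> = b * s" using B xk by simp
      finally have d3: "model_dist k ?B ?O = b * s" .
      have "model_dist k ?O ?P = \<bar>0 - r*x\<bar> / K"
        using hyp_dist[OF k onez, of 0 "r*x"] by (simp add: K_def)
      also have "\<dots> = r * (x / K)" using rx by simp
      also have "\<dots> = r * (a * s)" using xk by simp
      finally have d4: "model_dist k ?O ?P = r * (a * s)" .
      have "model_dist k ?P ?A = \<bar>r*x - x\<bar> / K"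
        using hyp_dist[OF k onez, of "r*x" x] by (simp add: K_def)
      also have "\<bar>r*x - x\<bar> = (1-r) * x" using rx by (simp add: algebra_simps)
      also have "(1-r) * x / K = (1-r) * (x / K)" by simp
      also have "\<dots> = (1-r) * (a * s)" using xk by simp
      finally have d5: "model_dist k ?P ?A = (1-r) * (a * s)" .
      have "model_dist k ?B ?Q = \<bar>y - r*y\<bar> / K"
        using hyp_dist[OF k CS, of y "r*y"] by (simp add: K_def)
      also have "\<bar>y - r*y\<bar> = (1-r) * y" using rx by (simp add: algebra_simps)
      also have "(1-r) * y / K = (1-r) * (y / K)" by simp
      also have "\<dots> = (1-r) * (b * s)" using xk by simp
      finally have d6: "model_dist k ?B ?Q = (1-r) * (b * s)" .
      have "model_dist k ?Q ?O = \<bar>r*y - 0\<bar> / K"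
        unfolding O' using hyp_dist[OF k CS, of "r*y" 0] by (simp add: K_def)
      also have "\<dots> = r * (y / K)" using rx by simp
      also have "\<dots> = r * (b * s)" using xk by simp
      finally have d7: "model_dist k ?Q ?O = r * (b * s)" .
      show "?O \<in> model_carrier k \<and> ?A \<in> model_carrier k \<and> ?B \<in> model_carrier k \<and>
        ?P \<in> model_carrier k \<and> ?Q \<in> model_carrier k \<and>
        model_dist k ?O ?A = a * s \<and> model_dist k ?A ?B = d s \<and> model_dist k ?B ?O = b * s \<and> 0 \<le> r \<and> r \<le> 1 \<and>
        model_dist k ?O ?P = r * (a * s) \<and> model_dist k ?P ?A = (1-r) * (a * s) \<and>
        model_dist k ?B ?Q = (1-r) * (b * s) \<and> model_dist k ?Q ?O = r * (b * s)"
        using c d1 d2 d3 d4 d5 d6 d7 r by auto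
    qed
    define w where "w = cosh (r*x) * cosh (r*y) - sinh (r*x) * sinh (r*y) * C"
    have sn: "0 \<le> sinh (r*x) * sinh (r*y)" using srxy by simp
    have "cosh (r*x - r*y) = cosh (r*x) * cosh (r*y) - sinh (r*x) * sinh (r*y)" by (simp add: cosh_diff)
    also have "\<dots> \<le> w" unfolding w_def using mult_left_mono[OF C(2) sn] by simp
    finally have w1: "1 \<le> w" using cosh_real_ge_1[of "r*x - r*y"] by linarith
    have "k * mink ?P ?Q = w" using hyp_mink[OF k] by (simp add: w_def)
    then have "model_dist k ?P ?Q = arcosh w / K" using k by (simp add: model_dist_def K_def)
    with thr have "d (r * s) \<le> arcosh w / K" by simp
    then have "K * d (r * s) \<le> arcosh w" using K by (simp add: pos_le_divide_eq mult.commute)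
    then have "cosh (K * d (r * s)) \<le> cosh (arcosh w)"
      using B' arcosh_nonneg_real[OF w1] by (subst cosh_real_nonneg_le_iff) auto
    then have "cosh (K * d (r * s)) \<le> w" using w1 by simp
    then have ineq: "C * (sinh (r*x) * sinh (r*y)) \<le> cosh (r*x) * cosh (r*y) - cosh (K * d (r * s))"
      by (simp add: w_def mult.commute)
    have e: "K*a*(r * s) = r*x" "K*b*(r * s) = r*y" by (simp_all add: x_def y_def mult_ac)
    have "Cf (r * s) = (cosh (r*x) * cosh (r*y) - cosh (K * d (r * s))) / (sinh (r*x) * sinh (r*y))"
      by (simp only: Cf_def e)
    then show ?thesis using ineq srxy by (simp add: C_def le_divide_eq)
  qed
  have "\<exists>L. (Cf \<longlongrightarrow> L) (at_right 0)"
  proof (rule mono_lim[OF s1])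
    fix s t :: real assume st: "0 < s" "s \<le> t" "t < s1"
    have "Cf t \<le> Cf ((s/t)*t)" using st by (intro key) auto
    then show "Cf t \<le> Cf s" using st by simp
  next
    fix s :: real assume "0 < s" "s < s1"
    then show "Cf s \<le> 1" using Cb by blast
  qed
  then obtain C0 where C0: "(Cf \<longlongrightarrow> C0) (at_right 0)" by blast
  show ?thesis
  proof (rule final_limit[OF K s1 _ C0 hphi_cont _ hsig_cont, where M="a+b" and c="K*(a-b)" and p="K*a" and q="K*b"])
    fix s :: real assume s: "0 < s" "s < s1"
    show "0 \<le> d s \<and> d s \<le> (a+b) * s" using tri[OF s] by (smt (verit) abs_ge_zero mult_nonneg_nonneg s(1))
    have sxy: "sinh (K*a * s) * sinh (K*b * s) > 0" using basic[OF s] by simp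
    have ce: "sinh (K*a * s) * sinh (K*b * s) * Cf s = cosh (K*a * s) * cosh (K*b * s) - cosh (K * d s)"
    proof -
      have "sinh (K*a * s) \<noteq> 0" "sinh (K*b * s) \<noteq> 0" using sxy by auto
      then show ?thesis by (simp add: Cf_def)
    qed
    have "cosh (K*(a-b) * s) = cosh (K*a * s - K*b * s)" by (simp add: algebra_simps)
    then have cd: "cosh (K*(a-b) * s) = cosh (K*a * s) * cosh (K*b * s) - sinh (K*a * s) * sinh (K*b * s)" by (simp add: cosh_diff)
    show "hphi (K * d s) * (K * d s)^2 = hphi (K*(a-b) * s) * (K*(a-b) * s)^2
      + (K*a * s * hsig (K*a * s)) * (K*b * s * hsig (K*b * s)) * (1 - Cf s)"
      unfolding hphi_id hsig_id using ce cd by (simp add: algebra_simps)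
  qed (auto simp: hphi_def hsig_def)
qed

lemma all3: "P 0 \<Longrightarrow> P 1 \<Longrightarrow> P 2 \<Longrightarrow> \<forall>i<(3::nat). P i"
  by (auto simp: numeral_3_eq_3 numeral_2_eq_2 less_Suc_eq)

lemma germ_unfold:
  assumes "germ y \<gamma>"
  shows "\<exists>e>0. \<exists>c\<ge>0. \<gamma> 0 = y \<and> (\<forall>s\<in>{0..<e}. \<forall>t\<in>{0..<e}. dist (\<gamma> s) (\<gamma> t) = c * \<bar>s - t\<bar>)"
  using assms unfolding germ_def by blast

lemma cat_thin:
  fixes \<gamma> \<eta> :: "real \<Rightarrow> 'a::metric_space"
  assumes CAT: "CAT_set k U" and ball: "ball y \<rho> \<subseteq> U"
    and \<gamma>0: "\<gamma> 0 = y" and \<eta>0: "\<eta> 0 = y"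
    and g\<gamma>: "\<forall>s\<in>{0..<e}. \<forall>t\<in>{0..<e}. dist (\<gamma> s) (\<gamma> t) = a * \<bar>s - t\<bar>"
    and g\<eta>: "\<forall>s\<in>{0..<e}. \<forall>t\<in>{0..<e}. dist (\<eta> s) (\<eta> t) = b * \<bar>s - t\<bar>"
    and a: "a \<ge> 0" and b: "b \<ge> 0" and s: "0 < s" "s < e" and as: "a * s < \<rho>" and bs: "b * s < \<rho>"
    and small: "k \<le> 0 \<or> 2 * (a + b) * s < pi / sqrt k"
  shows "thin_prop k a b (\<lambda>t. dist (\<gamma> t) (\<eta> t)) s"
proof -
  have da: "dist y (\<gamma> u) = a * u" if "0 \<le> u" "u < e" for u
    using g\<gamma> that s \<gamma>0 by (metis atLeastLessThan_iff diff_0 abs_minus_cancel abs_of_nonneg order.strict_trans1 less_le_not_le s(1) order_refl)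
  have db: "dist y (\<eta> u) = b * u" if "0 \<le> u" "u < e" for u
    using g\<eta> that s \<eta>0 by (metis atLeastLessThan_iff diff_0 abs_minus_cancel abs_of_nonneg order.strict_trans1 less_le_not_le s(1) order_refl)
  have das: "dist y (\<gamma> s) = a * s" using da s by simp
  have dbs: "dist y (\<eta> s) = b * s" using db s by simp
  have inU\<gamma>: "\<gamma> u \<in> U" if "0 \<le> u" "u \<le> s" for u
  proof -
    have "a * u \<le> a * s" using that a by (simp add: mult_left_mono)
    then have "dist y (\<gamma> u) < \<rho>" using da[of u] that s as by simp
    then show ?thesis using ball by auto
  qed
  have inU\<eta>: "\<eta> u \<in> U" if "0 \<le> u" "u \<le> s" for u
  proof -
    have "b * u \<le> b * s" using that b by (simp add: mult_left_mono)
    then have "dist y (\<eta> u) < \<rho>" using db[of u] that s bs by simp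
    then show ?thesis using ball by auto
  qed
  have dgh: "dist (\<gamma> s) (\<eta> s) \<le> a * s + b * s"
    using dist_triangle[of "\<gamma> s" "\<eta> s" y] das dbs by (simp add: dist_commute)
  have "k \<le> 0 \<or> dist (\<gamma> s) (\<eta> s) < pi / sqrt k"
  proof (cases "k \<le> 0")
    case False
    then have "2 * (a + b) * s < pi / sqrt k" using small by simp
    moreover have "0 \<le> (a+b) * s" using a b s by simp
    ultimately show ?thesis using dgh by (simp add: algebra_simps)
  qed simp
  then obtain \<sigma> where \<sigma>: "geodesic_seg \<sigma> (\<gamma> s) (\<eta> s)" "\<sigma> ` {0..1} \<subseteq> U"
  proof -
    have c1: "\<forall>x\<in>U. \<forall>z\<in>U. (k \<le> 0 \<or> dist x z < pi / sqrt k) \<longrightarrow>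
        (\<exists>\<gamma>. geodesic_seg \<gamma> x z \<and> \<gamma> ` {0..1} \<subseteq> U)" using CAT unfolding CAT_set_def by blast
    have "\<gamma> s \<in> U" "\<eta> s \<in> U" using inU\<gamma>[of s] inU\<eta>[of s] s by auto
    with c1 \<open>k \<le> 0 \<or> dist (\<gamma> s) (\<eta> s) < pi / sqrt k\<close> show thesis using that by blast
  qed
  define g :: "nat \<Rightarrow> real \<Rightarrow> 'a" where
    "g i = (if i = 0 then (\<lambda>t. \<gamma> (t * s)) else if i = 1 then \<sigma> else (\<lambda>t. \<eta> ((1 - t) * s)))" for i
  have g0: "g 0 = (\<lambda>t. \<gamma> (t * s))" and g1: "g 1 = \<sigma>" and g2: "g 2 = (\<lambda>t. \<eta> ((1 - t) * s))"
    by (simp_all add: g_def)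
  have \<sigma>01: "\<sigma> 0 = \<gamma> s" "\<sigma> 1 = \<eta> s" using \<sigma>(1) by (simp_all add: geodesic_seg_def)
  have geo0: "geodesic_seg (\<lambda>t. \<gamma> (t * s)) y (\<gamma> s)"
    unfolding geodesic_seg_def using \<gamma>0
  proof (simp, intro ballI)
    fix u v :: real assume uv: "u \<in> {0..1}" "v \<in> {0..1}"
    have "u * s \<in> {0..<e}" "v * s \<in> {0..<e}" using uv s
      by (auto simp: mult_le_cancel_right1 intro: order.strict_trans1[of _ s])
    then have "dist (\<gamma> (u * s)) (\<gamma> (v * s)) = a * \<bar>u * s - v * s\<bar>" using g\<gamma> by blast
    also have "\<dots> = \<bar>u - v\<bar> * (a * s)" using s by (simp add: abs_mult left_diff_distrib[symmetric])
    finally show "dist (\<gamma> (u * s)) (\<gamma> (v * s)) = \<bar>u - v\<bar> * dist y (\<gamma> s)" using das by simp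
  qed
  have geo2: "geodesic_seg (\<lambda>t. \<eta> ((1 - t) * s)) (\<eta> s) y"
    unfolding geodesic_seg_def using \<eta>0
  proof (simp, intro ballI)
    fix u v :: real assume uv: "u \<in> {0..1}" "v \<in> {0..1}"
    have "(1-u) * s \<in> {0..<e}" "(1-v) * s \<in> {0..<e}" using uv s
      by (auto simp: mult_le_cancel_right1 intro: order.strict_trans1[of _ s])
    then have "dist (\<eta> ((1-u) * s)) (\<eta> ((1-v) * s)) = b * \<bar>(1-u) * s - (1-v) * s\<bar>" using g\<eta> by blast
    also have "\<dots> = \<bar>u - v\<bar> * (b * s)" using s by (simp add: abs_mult left_diff_distrib[symmetric] abs_minus_commute)
    finally show "dist (\<eta> ((1-u) * s)) (\<eta> ((1-v) * s)) = \<bar>u - v\<bar> * dist (\<eta> s) y" using dbs by (simp add: dist_commute)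
  qed
  have im0: "g 0 ` {0..1} \<subseteq> U" unfolding g0 using inU\<gamma> s by (auto simp: mult_le_cancel_right1)
  have im1: "g 1 ` {0..1} \<subseteq> U" using \<sigma>(2) by (simp add: g_def)
  have im2: "g 2 ` {0..1} \<subseteq> U" unfolding g2 using inU\<eta> s by (auto simp: mult_le_cancel_right1)
  have L0: "dist (g 0 0) (g 0 1) = a * s" using das \<gamma>0 by (simp add: g0)
  have L1: "dist (g 1 0) (g 1 1) = dist (\<gamma> s) (\<eta> s)" by (simp add: g_def \<sigma>01)
  have L2: "dist (g 2 0) (g 2 1) = b * s" using dbs \<eta>0 by (simp add: g2 dist_commute)
  have H1: "\<forall>i<3. geodesic_seg (g i) (g i 0) (g (Suc i mod 3) 0) \<and> g i ` {0..1} \<subseteq> U"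
    by (rule all3) (use geo0 geo2 \<sigma>(1) im0 im1 im2 \<gamma>0 \<sigma>01 in \<open>simp_all add: g_def\<close>)
  have H2: "k \<le> 0 \<or> (\<Sum>i<3. dist (g i 0) (g i 1)) < 2 * pi / sqrt k"
  proof (cases "k \<le> 0")
    case False
    have "(\<Sum>i<3. dist (g i 0) (g i 1)) = a * s + dist (\<gamma> s) (\<eta> s) + b * s"
      using das dbs \<gamma>0 \<eta>0 by (simp add: numeral_3_eq_3 g_def \<sigma>01 dist_commute)
    also have "\<dots> \<le> 2 * (a + b) * s" using dgh by (simp add: algebra_simps)
    also have "\<dots> < pi / sqrt k" using small False by simp
    also have "\<dots> \<le> 2 * pi / sqrt k" using False by (simp add: divide_right_mono)
    finally show ?thesis by simp
  qed simp
  have T: "\<forall>A :: nat \<Rightarrow> real \<times> real \<times> real.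
          (\<forall>i<3. A i \<in> model_carrier k \<and>
                  model_dist k (A i) (A (Suc i mod 3)) = dist (g i 0) (g i 1)) \<longrightarrow>
          (\<forall>i<3. \<forall>j<3. \<forall>s\<in>{0..1}. \<forall>t\<in>{0..1}. \<forall>P Q.
              P \<in> model_carrier k \<and> Q \<in> model_carrier k \<and>
              model_dist k (A i) P = s * dist (g i 0) (g i 1) \<and>
              model_dist k P (A (Suc i mod 3)) = (1 - s) * dist (g i 0) (g i 1) \<and>
              model_dist k (A j) Q = t * dist (g j 0) (g j 1) \<and>
              model_dist k Q (A (Suc j mod 3)) = (1 - t) * dist (g j 0) (g j 1) \<longrightarrow>
              dist (g i s) (g j t) \<le> model_dist k P Q)"
    using CAT H1 H2 unfolding CAT_set_def by blast
  show ?thesis unfolding thin_prop_def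
  proof (intro allI impI)
    fix Oo A B P Q and r :: real
    assume H: "Oo \<in> model_carrier k \<and> A \<in> model_carrier k \<and>
    B \<in> model_carrier k \<and> P \<in> model_carrier k \<and> Q \<in> model_carrier k \<and>
    model_dist k Oo A = a * s \<and> model_dist k A B = dist (\<gamma> s) (\<eta> s) \<and> model_dist k B Oo = b * s \<and> 0 \<le> r \<and> r \<le> 1 \<and>
    model_dist k Oo P = r * (a * s) \<and> model_dist k P A = (1-r) * (a * s) \<and>
    model_dist k B Q = (1-r) * (b * s) \<and> model_dist k Q Oo = r * (b * s)"
    define AA :: "nat \<Rightarrow> real \<times> real \<times> real" where "AA i = (if i = 0 then Oo else if i = 1 then A else B)" for i
    have AA: "AA 0 = Oo" "AA 1 = A" "AA 2 = B" by (simp_all add: AA_def)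
    have HA: "\<forall>i<3. AA i \<in> model_carrier k \<and> model_dist k (AA i) (AA (Suc i mod 3)) = dist (g i 0) (g i 1)"
      by (rule all3) (use H das dbs \<gamma>0 \<eta>0 in \<open>simp_all add: AA_def g_def \<sigma>01 dist_commute\<close>)
    have "dist (g 0 r) (g 2 (1 - r)) \<le> model_dist k P Q"
    proof -
      note T' = mp[OF spec[OF T, of AA] HA]
      show ?thesis
        by (rule T'[rule_format]) (use H das dbs \<gamma>0 \<eta>0 in \<open>simp_all add: AA_def g_def \<sigma>01 dist_commute\<close>)
    qed
    then show "dist (\<gamma> (r * s)) (\<eta> (r * s)) \<le> model_dist k P Q" by (simp add: g0 g2)
  qed
qed

lemma germ_limit:
  fixes \<gamma> \<eta> :: "real \<Rightarrow> 'a::metric_space"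
  assumes loc: "locally_CAT k TYPE('a)" and g1: "germ y \<gamma>" and g2: "germ y \<eta>"
  shows "\<exists>L. ((\<lambda>t. dist (\<gamma> t) (\<eta> t) / t) \<longlongrightarrow> L) (at_right 0)"
proof -
  obtain e1 a where e1: "e1 > 0" "a \<ge> 0" "\<gamma> 0 = y" and ga: "\<forall>s\<in>{0..<e1}. \<forall>t\<in>{0..<e1}. dist (\<gamma> s) (\<gamma> t) = a * \<bar>s - t\<bar>"
    using germ_unfold[OF g1] by blast
  obtain e2 b where e2: "e2 > 0" "b \<ge> 0" "\<eta> 0 = y" and gb: "\<forall>s\<in>{0..<e2}. \<forall>t\<in>{0..<e2}. dist (\<eta> s) (\<eta> t) = b * \<bar>s - t\<bar>"
    using germ_unfold[OF g2] by blast
  define e where "e = min e1 e2"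
  have e: "e > 0" using e1 e2 by (simp add: e_def)
  have ga': "\<forall>s\<in>{0..<e}. \<forall>t\<in>{0..<e}. dist (\<gamma> s) (\<gamma> t) = a * \<bar>s - t\<bar>" using ga by (auto simp: e_def)
  have gb': "\<forall>s\<in>{0..<e}. \<forall>t\<in>{0..<e}. dist (\<eta> s) (\<eta> t) = b * \<bar>s - t\<bar>" using gb by (auto simp: e_def)
  have da: "dist (\<gamma> u) y = a * u" if "0 \<le> u" "u < e" for u
    using ga'[rule_format, of u 0] that e e1(3) by simp
  have db: "dist (\<eta> u) y = b * u" if "0 \<le> u" "u < e" for u
    using gb'[rule_format, of u 0] that e e2(3) by simp
  have ev: "eventually (\<lambda>t. t \<in> {0<..<e}) (at_right (0::real))"
    using e by (intro eventually_at_right_real) auto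
  show ?thesis
  proof (cases "a = 0 \<or> b = 0")
    case True
    then show ?thesis
    proof
      assume a0: "a = 0"
      have "eventually (\<lambda>t. b = dist (\<gamma> t) (\<eta> t) / t) (at_right 0)"
        using ev by (rule eventually_mono) (use da db a0 in \<open>auto simp: dist_commute\<close>)
      then have "((\<lambda>t. dist (\<gamma> t) (\<eta> t) / t) \<longlongrightarrow> b) (at_right 0)"
        by (rule Lim_transform_eventually[OF tendsto_const])
      then show ?thesis by blast
    next
      assume b0: "b = 0"
      have "eventually (\<lambda>t. a = dist (\<gamma> t) (\<eta> t) / t) (at_right 0)"
        using ev by (rule eventually_mono) (use da db b0 in \<open>auto simp: dist_commute\<close>)
      then have "((\<lambda>t. dist (\<gamma> t) (\<eta> t) / t) \<longlongrightarrow> a) (at_right 0)"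
        by (rule Lim_transform_eventually[OF tendsto_const])
      then show ?thesis by blast
    qed
  next
    case False
    then have a: "a > 0" and b: "b > 0" using e1 e2 by auto
    obtain U where U: "y \<in> interior U" "CAT_set k U" using loc unfolding locally_CAT_def by blast
    obtain \<rho> where \<rho>: "\<rho> > 0" "ball y \<rho> \<subseteq> interior U"
      using openE[OF open_interior U(1)] by metis
    have ball: "ball y \<rho> \<subseteq> U" using \<rho>(2) interior_subset by blast
    define s1 where "s1 = min e (min (\<rho> / (a+b)) (if k > 0 then pi / (2 * (sqrt k * (a+b))) else 1))"
    have s1: "s1 > 0" using e \<rho> a b by (simp add: s1_def)
    define d where "d t = dist (\<gamma> t) (\<eta> t)" for t
    have props: "s < e \<and> a * s < \<rho> \<and> b * s < \<rho> \<and> (k \<le> 0 \<or> 2 * (a + b) * s < pi / sqrt k)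
       \<and> (k > 0 \<longrightarrow> sqrt k * (a+b) * s1 \<le> pi/2)"
      if s: "0 < s" "s < s1" for s
    proof -
      have m: "s1 \<le> e" "s1 \<le> \<rho> / (a+b)" "k > 0 \<Longrightarrow> s1 \<le> pi / (2 * (sqrt k * (a+b)))"
        unfolding s1_def by auto
      have ab: "a + b > 0" using a b by simp
      have se: "s < e" using s m by linarith
      have "s < \<rho> / (a+b)" using s m by linarith
      then have "s * (a+b) < \<rho>" using ab by (simp add: less_divide_eq)
      moreover have "s * (a+b) = a * s + b * s" by (simp add: algebra_simps)
      moreover have "0 < a * s" "0 < b * s" using a b s by simp_all
      ultimately have asbs: "a * s < \<rho>" "b * s < \<rho>" by linarith+
      have kk: "k \<le> 0 \<or> 2 * (a + b) * s < pi / sqrt k"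
      proof (cases "k > 0")
        case True
        have pos: "2 * (sqrt k * (a+b)) > 0" using True ab by simp
        have "s < pi / (2 * (sqrt k * (a+b)))" using s m(3)[OF True] by linarith
        then have "s * (2 * (sqrt k * (a+b))) < pi" using pos by (simp add: less_divide_eq)
        then have "(2 * (a + b) * s) * sqrt k < pi" by (simp add: algebra_simps)
        then show ?thesis using True by (simp add: less_divide_eq)
      qed simp
      have kk2: "k > 0 \<longrightarrow> sqrt k * (a+b) * s1 \<le> pi/2"
      proof
        assume k: "k > 0"
        have pos: "2 * (sqrt k * (a+b)) > 0" using k ab by simp
        have "s1 * (2 * (sqrt k * (a+b))) \<le> pi" using m(3)[OF k] pos by (simp add: le_divide_eq)
        then show "sqrt k * (a+b) * s1 \<le> pi/2" by (simp add: algebra_simps)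
      qed
      show ?thesis using se asbs kk kk2 by blast
    qed
    have tri: "\<bar>a-b\<bar> * s \<le> d s \<and> d s \<le> (a+b) * s" if s: "0 < s" "s < s1" for s
    proof -
      have se: "s < e" using props[OF s] by blast
      have 1: "dist (\<gamma> s) y = a * s" "dist (\<eta> s) y = b * s" using da db s se by auto
      have t1: "d s \<le> dist (\<gamma> s) y + dist (\<eta> s) y" unfolding d_def by (rule dist_triangle2)
      have t2: "dist (\<gamma> s) y \<le> d s + dist (\<eta> s) y" unfolding d_def by (rule dist_triangle)
      have t3: "dist (\<eta> s) y \<le> d s + dist (\<gamma> s) y" unfolding d_def by (metis dist_commute dist_triangle)
      have ab: "\<bar>a-b\<bar> * s = \<bar>a * s - b * s\<bar>" using s by (simp add: abs_mult left_diff_distrib[symmetric])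
      have ab2: "(a+b) * s = a * s + b * s" by (simp add: algebra_simps)
      show ?thesis unfolding ab ab2 using 1 t1 t2 t3 by linarith
    qed
    have thin: "thin_prop k a b d s" if s: "0 < s" "s < s1" for s
    proof -
      have p: "s < e" "a * s < \<rho>" "b * s < \<rho>" "k \<le> 0 \<or> 2 * (a + b) * s < pi / sqrt k"
        using props[OF s] by blast+
      show ?thesis unfolding d_def
        by (rule cat_thin[OF U(2) ball e1(3) e2(3) ga' gb' e1(2) e2(2) s(1) p])
    qed
    have "\<exists>L. ((\<lambda>s. d s / s) \<longlongrightarrow> L) (at_right 0)"
    proof (cases "k = 0")
      case True
      then show ?thesis using model0[OF a b s1 tri] thin by simp
    next
      case False
      show ?thesis
      proof (cases "k > 0")
        case True
        have "sqrt k * (a+b) * s1 \<le> pi/2" using props[of "s1/2"] s1 True by simp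
        then show ?thesis using modelpos[OF a b s1 True _ tri thin] by simp
      next
        case False2: False
        then have "k < 0" using False by simp
        then show ?thesis using modelneg[OF a b s1 _ tri thin] by simp
      qed
    qed
    then show ?thesis by (simp add: d_def)
  qed
qed

lemma dgerm_tendsto:
  fixes \<gamma> \<eta> :: "real \<Rightarrow> 'a::metric_space"
  assumes loc: "locally_CAT k TYPE('a)" and g1: "germ y \<gamma>" and g2: "germ y \<eta>"
  shows "((\<lambda>t. dist (\<gamma> t) (\<eta> t) / t) \<longlongrightarrow> dgerm \<gamma> \<eta>) (at_right 0)"
proof -
  obtain L where L: "((\<lambda>t. dist (\<gamma> t) (\<eta> t) / t) \<longlongrightarrow> L) (at_right 0)"
    using germ_limit[OF assms] by blast
  then have "dgerm \<gamma> \<eta> = L" unfolding dgerm_def by (intro tendsto_Lim) auto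
  then show ?thesis using L by simp
qed

lemma dgerm_tri:
  fixes \<gamma> \<eta> \<zeta> :: "real \<Rightarrow> 'a::metric_space"
  assumes loc: "locally_CAT k TYPE('a)" and g1: "germ y \<gamma>" and g2: "germ y \<zeta>" and g3: "germ y \<eta>"
  shows "dgerm \<gamma> \<eta> \<le> dgerm \<gamma> \<zeta> + dgerm \<zeta> \<eta>"
proof (rule tendsto_le[OF trivial_limit_at_right_real])
  show "((\<lambda>t. dist (\<gamma> t) (\<zeta> t) / t + dist (\<zeta> t) (\<eta> t) / t) \<longlongrightarrow> dgerm \<gamma> \<zeta> + dgerm \<zeta> \<eta>) (at_right 0)"
    by (intro tendsto_add dgerm_tendsto[OF loc g1 g2] dgerm_tendsto[OF loc g2 g3])
  show "((\<lambda>t. dist (\<gamma> t) (\<eta> t) / t) \<longlongrightarrow> dgerm \<gamma> \<eta>) (at_right 0)"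
    by (rule dgerm_tendsto[OF loc g1 g3])
  have "eventually (\<lambda>t. t > (0::real)) (at_right 0)" by (simp add: eventually_at_right_less)
  then show "eventually (\<lambda>t. dist (\<gamma> t) (\<eta> t) / t \<le> dist (\<gamma> t) (\<zeta> t) / t + dist (\<zeta> t) (\<eta> t) / t) (at_right 0)"
    by (rule eventually_mono) (simp add: add_divide_distrib[symmetric] divide_right_mono dist_triangle)
qed

lemma dgerm_sym: "dgerm \<gamma> \<eta> = dgerm \<eta> \<gamma>"
  unfolding dgerm_def by (simp add: dist_commute)

lemma dgerm_nonneg:
  fixes \<gamma> \<eta> :: "real \<Rightarrow> 'a::metric_space"
  assumes loc: "locally_CAT k TYPE('a)" and g1: "germ y \<gamma>" and g2: "germ y \<eta>"
  shows "0 \<le> dgerm \<gamma> \<eta>"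
proof (rule tendsto_lowerbound[OF dgerm_tendsto[OF assms]])
  have "eventually (\<lambda>t. t > (0::real)) (at_right 0)" by (simp add: eventually_at_right_less)
  then show "eventually (\<lambda>t. 0 \<le> dist (\<gamma> t) (\<eta> t) / t) (at_right 0)"
    by (rule eventually_mono) simp
qed simp

lemma germ_const: "germ y (\<lambda>_. y)"
proof -
  have "(1::real) > 0 \<and> (0::real) \<ge> 0 \<and> (\<forall>s\<in>{0..<1::real}. \<forall>t\<in>{0..<1::real}. dist y y = 0 * \<bar>s - t\<bar>)" by simp
  then show ?thesis unfolding germ_def by blast
qed

lemma germ_geod:
  assumes g: "geodesic_seg \<gamma> y z" shows "germ y \<gamma>"
proof -
  have h: "\<gamma> 0 = y" "\<forall>s\<in>{0..1}. \<forall>t\<in>{0..1}. dist (\<gamma> s) (\<gamma> t) = \<bar>s - t\<bar> * dist y z"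
    using g unfolding geodesic_seg_def by auto
  have "\<forall>s\<in>{0..<1::real}. \<forall>t\<in>{0..<1::real}. dist (\<gamma> s) (\<gamma> t) = dist y z * \<bar>s - t\<bar>"
  proof (intro ballI)
    fix s t :: real assume "s \<in> {0..<1}" "t \<in> {0..<1}"
    then have "dist (\<gamma> s) (\<gamma> t) = \<bar>s - t\<bar> * dist y z" using h(2) by auto
    then show "dist (\<gamma> s) (\<gamma> t) = dist y z * \<bar>s - t\<bar>" by (simp add: mult.commute)
  qed
  moreover have "(1::real) > 0" "dist y z \<ge> 0" by simp_all
  ultimately show ?thesis unfolding germ_def using h(1) by blast
qed

lemma dgerm_geod:
  assumes "geodesic_seg \<gamma> y z"
  shows "dgerm \<gamma> (\<lambda>_. y) = dist y z"
proof -
  have "eventually (\<lambda>t. t \<in> {0<..<1}) (at_right (0::real))" by (intro eventually_at_right_real) auto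
  then have "eventually (\<lambda>t. dist y z = dist (\<gamma> t) y / t) (at_right 0)"
  proof (rule eventually_mono)
    fix t :: real assume t: "t \<in> {0<..<1}"
    have h: "\<gamma> 0 = y" "\<forall>s\<in>{0..1}. \<forall>t\<in>{0..1}. dist (\<gamma> s) (\<gamma> t) = \<bar>s - t\<bar> * dist y z"
      using assms unfolding geodesic_seg_def by auto
    have "dist (\<gamma> t) (\<gamma> 0) = \<bar>t - 0\<bar> * dist y z" using h(2) t by simp
    then have "dist (\<gamma> t) y = t * dist y z" using h(1) t by simp
    then show "dist y z = dist (\<gamma> t) y / t" using t by simp
  qed
  then have "((\<lambda>t. dist (\<gamma> t) y / t) \<longlongrightarrow> dist y z) (at_right 0)"
    by (rule Lim_transform_eventually[OF tendsto_const])
  then show ?thesis unfolding dgerm_def by (intro tendsto_Lim) auto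
qed

theorem proposition3p9:
  fixes k l :: real and E :: "'a::complete_space \<Rightarrow> ereal"
  assumes "geodesic_space TYPE('a)"
    and "locally_CAT k TYPE('a)"
    and "\<forall>y. E y \<noteq> - \<infinity>"
    and "lambda_convex l E"
    and "lsc E"
  shows "(\<forall>y\<in>dom_subdiff l E. slope E y \<le> (INF v\<in>minus_subdiff l E y. ereal (tnorm y v)))
         \<and> dom_subdiff l E \<subseteq> dom_slope E"
proof -
  note loc = assms(2)
  have main: "slope E y \<le> ereal (tnorm y v)" if v: "v \<in> minus_subdiff l E y" for y v
  proof -
    from v have Ey: "E y \<noteq> \<infinity>" and ts: "tangent_seq y v"
      and sub: "\<forall>z. \<exists>\<gamma>. geodesic_seg \<gamma> y z \<and>
        E y - ereal (tinner y v \<gamma>) + ereal (l / 2 * (dist y z)\<^sup>2) \<le> E z"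
      unfolding minus_subdiff_def by auto
    from ts have gv: "\<And>n. germ y (v n)" and cau: "\<And>e. e > 0 \<Longrightarrow> \<exists>N. \<forall>m\<ge>N. \<forall>n\<ge>N. dgerm (v m) (v n) < e"
      unfolding tangent_seq_def by auto
    have gc: "germ y (\<lambda>_. y)" by (rule germ_const)
    define an where "an n = dgerm (v n) (\<lambda>_. y)" for n
    have an_diff: "\<bar>an m - an n\<bar> \<le> dgerm (v m) (v n)" for m n
    proof -
      have "an m \<le> dgerm (v m) (v n) + an n" unfolding an_def by (rule dgerm_tri[OF loc gv gv gc])
      moreover have "an n \<le> dgerm (v n) (v m) + an m" unfolding an_def by (rule dgerm_tri[OF loc gv gv gc])
      ultimately show ?thesis using dgerm_sym[of "v n" "v m"] by linarith
    qed
    have "Cauchy an"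
    proof (rule metric_CauchyI)
      fix e :: real assume "e > 0"
      then obtain N where N: "\<forall>m\<ge>N. \<forall>n\<ge>N. dgerm (v m) (v n) < e" using cau by blast
      show "\<exists>M. \<forall>m\<ge>M. \<forall>n\<ge>M. dist (an m) (an n) < e"
      proof (intro exI allI impI)
        fix m n assume "N \<le> m" "N \<le> n"
        then have "dgerm (v m) (v n) < e" using N by blast
        then show "dist (an m) (an n) < e" using an_diff[of m n] by (simp add: dist_real_def)
      qed
    qed
    then have "an \<longlonglongrightarrow> lim an" using Cauchy_convergent_iff convergent_LIMSEQ_iff by blast
    moreover have "tnorm y v = lim an" unfolding tnorm_def an_def by simp
    ultimately have an: "an \<longlonglongrightarrow> tnorm y v" by simp
    define A where "A = tnorm y v"
    have an0: "0 \<le> an n" for n unfolding an_def by (rule dgerm_nonneg[OF loc gv gc])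
    have A0: "A \<ge> 0" unfolding A_def by (rule LIMSEQ_le_const[OF an]) (use an0 in auto)
    have bound: "tinner y v \<gamma> \<le> A * dist y z" if g: "geodesic_seg \<gamma> y z" for \<gamma> z
    proof -
      have gg: "germ y \<gamma>" by (rule germ_geod[OF g])
      define dn where "dn n = dgerm (v n) \<gamma>" for n
      define b where "b = dgerm \<gamma> (\<lambda>_. y)"
      have b: "b = dist y z" unfolding b_def by (rule dgerm_geod[OF g])
      have dn_diff: "\<bar>dn m - dn n\<bar> \<le> dgerm (v m) (v n)" for m n
      proof -
        have "dn m \<le> dgerm (v m) (v n) + dn n" unfolding dn_def by (rule dgerm_tri[OF loc gv gv gg])
        moreover have "dn n \<le> dgerm (v n) (v m) + dn m" unfolding dn_def by (rule dgerm_tri[OF loc gv gv gg])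
        ultimately show ?thesis using dgerm_sym[of "v n" "v m"] by linarith
      qed
      have "Cauchy dn"
      proof (rule metric_CauchyI)
        fix e :: real assume "e > 0"
        then obtain N where N: "\<forall>m\<ge>N. \<forall>n\<ge>N. dgerm (v m) (v n) < e" using cau by blast
        show "\<exists>M. \<forall>m\<ge>M. \<forall>n\<ge>M. dist (dn m) (dn n) < e"
        proof (intro exI allI impI)
          fix m n assume "N \<le> m" "N \<le> n"
          then have "dgerm (v m) (v n) < e" using N by blast
          then show "dist (dn m) (dn n) < e" using dn_diff[of m n] by (simp add: dist_real_def)
        qed
      qed
      then have dn: "dn \<longlonglongrightarrow> lim dn" using Cauchy_convergent_iff convergent_LIMSEQ_iff by blast
      have t_le: "(an n ^ 2 + b ^ 2 - dn n ^ 2) / 2 \<le> an n * b" for n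
      proof -
        have 1: "an n \<le> dn n + b" unfolding an_def dn_def b_def by (rule dgerm_tri[OF loc gv gg gc])
        have "b \<le> dgerm \<gamma> (v n) + an n" unfolding an_def b_def by (rule dgerm_tri[OF loc gg gv gc])
        then have 2: "b \<le> dn n + an n" unfolding dn_def using dgerm_sym[of \<gamma> "v n"] by simp
        have 3: "0 \<le> dn n" unfolding dn_def by (rule dgerm_nonneg[OF loc gv gg])
        have "\<bar>an n - b\<bar> \<le> \<bar>dn n\<bar>" using 1 2 3 by linarith
        then have "(an n - b)^2 \<le> (dn n)^2" by (simp add: abs_le_square_iff)
        then show ?thesis by (simp add: power2_diff)
      qed
      have tlim: "(\<lambda>n. (an n ^ 2 + b ^ 2 - dn n ^ 2) / 2) \<longlonglongrightarrow> (A ^ 2 + b ^ 2 - (lim dn) ^ 2) / 2"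
        unfolding A_def by (intro tendsto_intros an dn) auto
      have "tinner y v \<gamma> = lim (\<lambda>n. (an n ^ 2 + b ^ 2 - dn n ^ 2) / 2)"
        unfolding tinner_def an_def b_def dn_def by simp
      also have "\<dots> = (A ^ 2 + b ^ 2 - (lim dn) ^ 2) / 2" using tlim by (rule limI)
      also have "\<dots> \<le> A * b"
      proof (rule LIMSEQ_le[OF tlim])
        show "(\<lambda>n. an n * b) \<longlonglongrightarrow> A * b" unfolding A_def by (intro tendsto_intros an)
        show "\<exists>N. \<forall>n\<ge>N. (an n ^ 2 + b ^ 2 - dn n ^ 2) / 2 \<le> an n * b" using t_le by blast
      qed
      finally show ?thesis using b by simp
    qed
    obtain ey where ey: "E y = ereal ey" using Ey assms(3) by (cases "E y") auto
    have ptw: "max 0 (E y - E z) / ereal (dist y z) \<le> ereal (A + \<bar>l\<bar> / 2 * dist y z)" if z: "z \<noteq> y" for z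
    proof -
      obtain \<gamma> where g: "geodesic_seg \<gamma> y z"
        and ineq: "E y - ereal (tinner y v \<gamma>) + ereal (l / 2 * (dist y z)\<^sup>2) \<le> E z"
        using sub by blast
      define D where "D = dist y z"
      have D: "D > 0" using z by (simp add: D_def)
      have tb: "tinner y v \<gamma> \<le> A * D" unfolding D_def by (rule bound[OF g])
      have rhs0: "0 \<le> A + \<bar>l\<bar> / 2 * D" using A0 D by simp
      show ?thesis
      proof (cases "E z = \<infinity>")
        case True
        then show ?thesis using ey rhs0 by (simp add: D_def)
      next
        case False
        then obtain ez where ez: "E z = ereal ez" using assms(3) by (cases "E z") auto
        have "ey - tinner y v \<gamma> + l / 2 * D^2 \<le> ez" using ineq ey ez by (simp add: D_def)
        moreover have "- (l / 2 * D^2) \<le> \<bar>l\<bar> / 2 * D^2" by (simp add: abs_if)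
        ultimately have "ey - ez \<le> A * D + \<bar>l\<bar> / 2 * D^2" using tb by linarith
        moreover have "0 \<le> (A + \<bar>l\<bar> / 2 * D) * D" using rhs0 D by simp
        moreover have "(A + \<bar>l\<bar> / 2 * D) * D = A * D + \<bar>l\<bar> / 2 * D^2"
          by (simp add: algebra_simps power2_eq_square)
        ultimately have "max 0 (ey - ez) \<le> (A + \<bar>l\<bar> / 2 * D) * D" by linarith
        then have "max 0 (ey - ez) / D \<le> A + \<bar>l\<bar> / 2 * D" using D by (simp add: pos_divide_le_eq)
        moreover have e1: "E y - E z = ereal (ey - ez)" using ey ez by simp
        moreover have e2: "max 0 (ereal (ey - ez)) = ereal (max 0 (ey - ez))" by (rule ereal_max_0)
        moreover have e3: "ereal (max 0 (ey - ez)) / ereal D = ereal (max 0 (ey - ez) / D)" using D by (simp del: ereal_max)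
        ultimately show ?thesis unfolding D_def[symmetric] by simp
      qed
    qed
    have ev: "eventually (\<lambda>z. max 0 (E y - E z) / ereal (dist y z) \<le> ereal (A + \<bar>l\<bar> / 2 * dist y z)) (at y)"
      unfolding eventually_at_filter by (rule always_eventually) (metis ptw)
    have "slope E y \<le> Limsup (at y) (\<lambda>z. ereal (A + \<bar>l\<bar> / 2 * dist y z))"
      unfolding slope_def by (rule Limsup_mono[OF ev])
    also have "\<dots> \<le> ereal A"
    proof (cases "at y = (bot :: 'a filter)")
      case True
      then show ?thesis by simp
    next
      case False
      have "((\<lambda>z. dist y z) \<longlongrightarrow> dist y y) (at y)" by (intro tendsto_intros)
      then have "((\<lambda>z. A + \<bar>l\<bar> / 2 * dist y z) \<longlongrightarrow> A + \<bar>l\<bar> / 2 * dist y y) (at y)" by (intro tendsto_intros)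
      then have "((\<lambda>z. ereal (A + \<bar>l\<bar> / 2 * dist y z)) \<longlongrightarrow> ereal A) (at y)" by (simp add: tendsto_ereal)
      then have "Limsup (at y) (\<lambda>z. ereal (A + \<bar>l\<bar> / 2 * dist y z)) = ereal A"
        using False by (intro lim_imp_Limsup) auto
      then show ?thesis by simp
    qed
    finally show ?thesis by (simp add: A_def)
  qed
  show ?thesis
  proof
    show "\<forall>y\<in>dom_subdiff l E. slope E y \<le> (INF v\<in>minus_subdiff l E y. ereal (tnorm y v))"
      by (auto intro!: INF_greatest main)
    show "dom_subdiff l E \<subseteq> dom_slope E"
    proof
      fix y assume y: "y \<in> dom_subdiff l E"
      then have Ey: "E y \<noteq> \<infinity>" and "minus_subdiff l E y \<noteq> {}" unfolding dom_subdiff_def by auto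
      then obtain v where "v \<in> minus_subdiff l E y" by blast
      then have "slope E y \<le> ereal (tnorm y v)" by (rule main)
      moreover have "ereal (tnorm y v) < \<infinity>" by simp
      ultimately have "slope E y < \<infinity>" by (rule order_le_less_trans)
      then show "y \<in> dom_slope E" using Ey unfolding dom_slope_def by simp
    qed
  qed
qed

end
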